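(* Let $(K,\delta)$ be a differential field of characteristic zero and $x\in K$ with $\delta(x)=1$, and let $C_K=\{c\in K:\delta(c)=0\}$ be its constant field. Then the set $\mathrm{Stab}(\delta,K)$ of stable elements is a $C_K[x]$-submodule of $K$ (under multiplication in $K$), and $\delta(\mathrm{Stab}(\delta,K))\subseteq\mathrm{Stab}(\delta,K)$.
   Context: A differential field $(K,\delta)$ is a field with an additive map $\delta$ satisfying $\delta(fg)=f\delta(g)+g\delta(f)$. $\mathrm{Stab}(\delta,K)$ is the set of $a\in K$ for which there is a sequence $(a_i)_{i\ge0}$ in $K$ with $a_0=a$ and $\delta(a_{i+1})=a_i$ for all $i\in\mathbb{N}$. *)

theory Defs
  imports "HOL-Computational_Algebra.Polynomial"
begin

definition derivation :: "('a::field \<Rightarrow> 'a) \<Rightarrow> bool" where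
  "derivation \<delta> \<longleftrightarrow> (\<forall>f g. \<delta> (f + g) = \<delta> f + \<delta> g) \<and>
                     (\<forall>f g. \<delta> (f * g) = f * \<delta> g + g * \<delta> f)"

definition constants :: "('a::field \<Rightarrow> 'a) \<Rightarrow> 'a set" where
  "constants \<delta> = {c. \<delta> c = 0}"

definition Stab :: "('a::field \<Rightarrow> 'a) \<Rightarrow> 'a set" where
  "Stab \<delta> = {a. \<exists>s :: nat \<Rightarrow> 'a. s 0 = a \<and> (\<forall>i. \<delta> (s (Suc i)) = s i)}"

definition const_poly_ring :: "('a::field \<Rightarrow> 'a) \<Rightarrow> 'a \<Rightarrow> 'a set" where
  "const_poly_ring \<delta> x = {poly p x | p. \<forall>i. coeff p i \<in> constants \<delta>}"

end

theory Submission
  imports Defs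
begin

lemma der_add: "derivation d \<Longrightarrow> d (f + g) = d f + d g"
  unfolding derivation_def by blast

lemma der_mult: "derivation d \<Longrightarrow> d (f * g) = f * d g + g * d f"
  unfolding derivation_def by blast

lemma der_zero: "derivation d \<Longrightarrow> d 0 = 0"
proof -
  assume D: "derivation d"
  have "d 0 + d 0 = d 0 + 0" using der_add[OF D, of 0 0] by simp
  then show ?thesis by (rule add_left_imp_eq)
qed

lemma der_minus: "derivation d \<Longrightarrow> d (- f) = - d f"
  using der_add[of d f "-f"] der_zero[of d] by (simp add: add.commute eq_neg_iff_add_eq_0)

lemma der_diff: "derivation d \<Longrightarrow> d (f - g) = d f - d g"
  using der_add[of d f "-g"] der_minus[of d g] by simp

lemma der_of_nat: "derivation d \<Longrightarrow> d (of_nat n * y) = of_nat n * d y"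
proof (induction n)
  case 0 then show ?case by (simp add: der_zero)
next
  case (Suc n)
  have "d (of_nat (Suc n) * y) = d (y + of_nat n * y)" by (simp add: algebra_simps)
  also have "\<dots> = d y + of_nat n * d y" using Suc der_add[of d] by simp
  finally show ?case by (simp add: algebra_simps)
qed

lemma stab_add: "a \<in> Stab d \<Longrightarrow> b \<in> Stab d \<Longrightarrow> derivation d \<Longrightarrow> a + b \<in> Stab d"
proof -
  assume "a \<in> Stab d" "b \<in> Stab d" and D: "derivation d"
  then obtain s t where s: "s 0 = a" "\<forall>i. d (s (Suc i)) = s i"
    and t: "t 0 = b" "\<forall>i. d (t (Suc i)) = t i" unfolding Stab_def by blast
  show ?thesis unfolding Stab_def
    by (rule CollectI, rule exI[of _ "\<lambda>i. s i + t i"]) (simp add: s t der_add[OF D])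
qed

lemma stab_const: "a \<in> Stab d \<Longrightarrow> d c = 0 \<Longrightarrow> derivation d \<Longrightarrow> c * a \<in> Stab d"
proof -
  assume "a \<in> Stab d" "d c = 0" and D: "derivation d"
  then obtain s where s: "s 0 = a" "\<forall>i. d (s (Suc i)) = s i"
    unfolding Stab_def by blast
  show ?thesis unfolding Stab_def
    by (rule CollectI, rule exI[of _ "\<lambda>i. c * s i"]) (simp add: s der_mult[OF D] \<open>d c = 0\<close>)
qed

lemma stab_x: "a \<in> Stab d \<Longrightarrow> d x = 1 \<Longrightarrow> derivation d \<Longrightarrow> x * a \<in> Stab d"
proof -
  assume "a \<in> Stab d" "d x = 1" and D: "derivation d"
  then obtain s where s: "s 0 = a" "\<forall>i. d (s (Suc i)) = s i"
    unfolding Stab_def by blast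
  have "d (x * s (Suc i) - of_nat (Suc i) * s (Suc (Suc i))) = x * s i - of_nat i * s (Suc i)" for i
  proof -
    have "d (x * s (Suc i) - of_nat (Suc i) * s (Suc (Suc i)))
        = (x * s i + s (Suc i)) - of_nat (Suc i) * s (Suc i)"
      using s(2) \<open>d x = 1\<close> by (simp only: der_diff[OF D] der_of_nat[OF D]) (simp add: der_mult[OF D])
    also have "\<dots> = x * s i - of_nat i * s (Suc i)" by (simp add: algebra_simps)
    finally show ?thesis .
  qed
  then show ?thesis unfolding Stab_def
    by (intro CollectI exI[of _ "\<lambda>i. x * s i - of_nat i * s (Suc i)"]) (simp add: s)
qed

lemma stab_poly: "derivation d \<Longrightarrow> d x = 1 \<Longrightarrow> \<forall>i. coeff p i \<in> constants d \<Longrightarrow> a \<in> Stab d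
  \<Longrightarrow> poly p x * a \<in> Stab d"
proof (induction p arbitrary: a)
  case 0
  then show ?case using stab_const[of a d 0] der_zero[of d] by simp
next
  case (pCons c p)
  have cp: "\<forall>i. coeff p i \<in> constants d"
    using pCons.prems(3) by (metis coeff_pCons_Suc)
  have cc: "d c = 0" using pCons.prems(3)[rule_format, of 0] by (simp add: constants_def)
  have "poly p x * a \<in> Stab d" using pCons.IH[OF pCons.prems(1,2) cp pCons.prems(4)] .
  then have "x * (poly p x * a) \<in> Stab d" using stab_x pCons.prems by blast
  moreover have "c * a \<in> Stab d" using stab_const cc pCons.prems by blast
  ultimately have "c * a + x * (poly p x * a) \<in> Stab d" using stab_add pCons.prems by blast
  then show ?case by (simp add: algebra_simps)
qed

theorem theorem2p11:
  fixes \<delta> :: "'a::field_char_0 \<Rightarrow> 'a" and x :: 'a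
  assumes "derivation \<delta>" and "\<delta> x = 1"
  shows "0 \<in> Stab \<delta>
     \<and> (\<forall>a\<in>Stab \<delta>. \<forall>b\<in>Stab \<delta>. a + b \<in> Stab \<delta>)
     \<and> (\<forall>r\<in>const_poly_ring \<delta> x. \<forall>a\<in>Stab \<delta>. r * a \<in> Stab \<delta>)
     \<and> \<delta> ` Stab \<delta> \<subseteq> Stab \<delta>"
proof (intro conjI ballI subsetI)
  show "0 \<in> Stab \<delta>" unfolding Stab_def
    by (intro CollectI exI[of _ "\<lambda>i. 0"]) (simp add: der_zero[OF assms(1)])
next
  fix a b assume "a \<in> Stab \<delta>" "b \<in> Stab \<delta>"
  then show "a + b \<in> Stab \<delta>" using stab_add assms by blast
next
  fix r a assume "r \<in> const_poly_ring \<delta> x" "a \<in> Stab \<delta>"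
  then show "r * a \<in> Stab \<delta>" unfolding const_poly_ring_def
    using stab_poly assms by blast
next
  fix y assume "y \<in> \<delta> ` Stab \<delta>"
  then obtain a where a: "a \<in> Stab \<delta>" "y = \<delta> a" by blast
  then obtain s where s: "s 0 = a" "\<forall>i. \<delta> (s (Suc i)) = s i"
    unfolding Stab_def by blast
  have "\<delta> ((\<lambda>i. if i = 0 then \<delta> a else s (i - 1)) (Suc i)) = (\<lambda>i. if i = 0 then \<delta> a else s (i - 1)) i" for i
    using s by (cases i) auto
  then show "y \<in> Stab \<delta>" unfolding Stab_def using a
    by (intro CollectI exI[of _ "\<lambda>i. if i = 0 then \<delta> a else s (i - 1)"]) simp
qed

end
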